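(* Let $\Phi=\phi_1\wedge\cdots\wedge\phi_m$ be an extremal instance over variables $\mathbf X=(X_1,\dots,X_n)$ with product distribution $\mathcal D$, and suppose $\Phi$ is satisfiable, i.e. $\Pr_{\mathcal D}(\Phi(\mathbf X))>0$. Then $\mathrm{PRS}(\Phi,\mathcal D)$ terminates with probability $1$, whatever rule is used to choose the false clause in each iteration. On termination, $\mathbf X$ is distributed according to $\mathcal D_\Phi$, the distribution $\mathcal D$ conditioned on $\Phi(\mathbf X)$ being true.
   Context: Setting: For $i\in[n]$, $X_i$ takes values in a countable set $D_i$ equipped with a probability distribution $\mathcal D_i$; $\mathcal D=\mathcal D_1\times\cdots\times\mathcal D_n$ is the product distribution. A formula $\Phi=\phi_1\wedge\cdots\wedge\phi_m$ is a conjunction of clauses. Each clause $\phi_k$ is a Boolean function of the variables $X_i$ with $i\in\mathrm{Scp}(\phi_k)$, where $\mathrm{Scp}(\phi_k)\subseteq[n]$ is a nonempty set called the scope of $\phi_k$. The instance $\Phi$ is extremal if for all $1\le k<\ell\le m$ with $\mathrm{Scp}(\phi_k)\cap\mathrm{Scp}(\phi_\ell)\neq\emptyset$, the formula $\phi_k\vee\phi_\ell$ is true under every assignment, i.e. two clauses sharing a variable are never simultaneously false. Algorithm $\mathrm{PRS}(\Phi,\mathcal D)$ (Partial Rejection Sampling): sample $\mathbf X$ from $\mathcal D$. While $\Phi(\mathbf X)$ is false, choose any clause $\phi_k$ that is false under the current $\mathbf X$ and resample all variables $X_i$, $i\in\mathrm{Scp}(\phi_k)$, independently from their distributions $\mathcal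 D_i$. The choice of the false clause may be made by an arbitrary rule; it may depend on the current values, the past history, or independent external randomness. Each execution of the loop body is one iteration. *)

theory Defs
  imports "HOL-Probability.Probability"
begin

text \<open>Variables are indexed by a finite type 'i (so n = CARD('i)), clauses by a
finite type 'c (so m = CARD('c)).
The distribution of X_i is the pmf Dd i; its (countable) value set D_i is V i.\<close>

definition prod_dist :: "('i::finite \<Rightarrow> 'a pmf) \<Rightarrow> ('i \<Rightarrow> 'a) pmf" where
  "prod_dist Dd = Pi_pmf UNIV undefined Dd"

definition formula :: "('c \<Rightarrow> ('i \<Rightarrow> 'a) \<Rightarrow> bool) \<Rightarrow> ('i \<Rightarrow> 'a) \<Rightarrow> bool" where
  "formula phi x = (\<forall>k. phi k x)"

definition resample :: "('i::finite \<Rightarrow> 'a pmf) \<Rightarrow> 'i set \<Rightarrow> ('i \<Rightarrow> 'a) \<Rightarrow> ('i \<Rightarrow> 'a) pmf" where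
  "resample Dd S x = map_pmf (\<lambda>z i. if i \<in> S then z i else x i) (prod_dist Dd)"

text \<open>State of the run = full history: list of assignments (current one first)
and list of clauses chosen so far (most recent first).  The selection rule sel
is an arbitrary randomized function of the full history.\<close>
type_synonym ('i, 'a, 'c) history = "('i \<Rightarrow> 'a) list \<times> 'c list"

definition prs_step ::
  "('c \<Rightarrow> ('i \<Rightarrow> 'a) \<Rightarrow> bool) \<Rightarrow> ('i::finite \<Rightarrow> 'a pmf) \<Rightarrow> ('c \<Rightarrow> 'i set)
   \<Rightarrow> (('i, 'a, 'c) history \<Rightarrow> 'c pmf) \<Rightarrow> ('i, 'a, 'c) history \<Rightarrow> ('i, 'a, 'c) history pmf" where
  "prs_step phi Dd S sel h =
     (if formula phi (hd (fst h)) then return_pmf h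
      else bind_pmf (sel h) (\<lambda>k.
             map_pmf (\<lambda>y. (y # fst h, k # snd h)) (resample Dd (S k) (hd (fst h)))))"

primrec prs_run ::
  "('c \<Rightarrow> ('i \<Rightarrow> 'a) \<Rightarrow> bool) \<Rightarrow> ('i::finite \<Rightarrow> 'a pmf) \<Rightarrow> ('c \<Rightarrow> 'i set)
   \<Rightarrow> (('i, 'a, 'c) history \<Rightarrow> 'c pmf) \<Rightarrow> nat \<Rightarrow> ('i, 'a, 'c) history pmf" where
  "prs_run phi Dd S sel 0 = map_pmf (\<lambda>x. ([x], [])) (prod_dist Dd)"
| "prs_run phi Dd S sel (Suc t) = bind_pmf (prs_run phi Dd S sel t) (prs_step phi Dd S sel)"

definition extremal :: "('i \<Rightarrow> 'a set) \<Rightarrow> ('c \<Rightarrow> 'i set) \<Rightarrow> ('c \<Rightarrow> ('i \<Rightarrow> 'a) \<Rightarrow> bool) \<Rightarrow> bool" where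
  "extremal V S phi = (\<forall>k l. k \<noteq> l \<longrightarrow> S k \<inter> S l \<noteq> {} \<longrightarrow>
      (\<forall>x. (\<forall>i. x i \<in> V i) \<longrightarrow> phi k x \<or> phi l x))"

end

theory Submission
  imports Defs
begin

lemma pmf_integrable_bdd:
  fixes f :: "'b \<Rightarrow> real"
  assumes "\<And>x. \<bar>f x\<bar> \<le> B"
  shows "integrable (measure_pmf M) f"
  by (rule measure_pmf.integrable_const_bound[where B=B]) (use assms in auto)

lemma pmf_integral_bind:
  fixes f :: "'b \<Rightarrow> real"
  assumes "\<And>x. \<bar>f x\<bar> \<le> B"
  shows "measure_pmf.expectation (bind_pmf M N) f =
         measure_pmf.expectation M (\<lambda>x. measure_pmf.expectation (N x) f)"
  unfolding measure_pmf_bind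
  by (rule integral_bind[where K="count_space UNIV" and B=B and B'=1])
     (use assms in \<open>auto simp: measure_pmf.emeasure_space_1 measure_pmf_in_subprob_space\<close>)

lemma res_rep:
  "resample Dd U x = Pi_pmf UNIV undefined (\<lambda>i. if i\<in>U then Dd i else return_pmf (x i))"
proof -
  have "Pi_pmf UNIV undefined (\<lambda>i. if i\<in>U then Dd i else return_pmf (x i)) =
        Pi_pmf UNIV undefined (\<lambda>i. bind_pmf (Dd i) (\<lambda>v. return_pmf (if i\<in>U then v else x i)))"
    by (intro Pi_pmf_cong) (auto simp: bind_return_pmf')
  also have "\<dots> = bind_pmf (prod_dist Dd) (\<lambda>f. Pi_pmf UNIV undefined
                    (\<lambda>i. return_pmf (if i\<in>U then f i else x i)))"
    unfolding prod_dist_def by (rule Pi_pmf_bind) simp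
  also have "\<dots> = resample Dd U x"
    by (simp add: resample_def map_pmf_def)
  finally show ?thesis ..
qed

lemma if_bind_aux: "bind_pmf M (\<lambda>v. if c then N else return_pmf v) = (if c then N else M)"
  by (cases c) (simp_all add: bind_return_pmf')

lemma res_comp: "bind_pmf (resample Dd A x) (resample Dd B) = resample Dd (A \<union> B) x"
proof -
  have "bind_pmf (resample Dd A x) (resample Dd B) =
     bind_pmf (Pi_pmf UNIV undefined (\<lambda>i. if i\<in>A then Dd i else return_pmf (x i)))
        (\<lambda>f. Pi_pmf UNIV undefined (\<lambda>i. (\<lambda>i v. if i\<in>B then Dd i else return_pmf v) i (f i)))"
    by (simp add: res_rep[abs_def])
  also have "\<dots> = Pi_pmf UNIV undefined (\<lambda>i. bind_pmf (if i\<in>A then Dd i else return_pmf (x i))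
                   (\<lambda>v. if i\<in>B then Dd i else return_pmf v))"
    by (rule Pi_pmf_bind[symmetric]) simp
  also have "\<dots> = resample Dd (A \<union> B) x"
    unfolding res_rep
    by (intro Pi_pmf_cong) (auto simp: bind_return_pmf bind_return_pmf' if_bind_aux)
  finally show ?thesis .
qed

lemma res_UNIV: "resample Dd UNIV x = prod_dist Dd"
  by (simp add: resample_def)

lemma res_empty: "resample Dd {} x = return_pmf x"
  by (simp add: resample_def)

lemma bind_D_res: "bind_pmf (prod_dist Dd) (resample Dd B) = prod_dist Dd"
  using res_comp[of Dd UNIV undefined B] by (simp add: res_UNIV)

lemma set_D: "set_pmf (prod_dist Dd) \<subseteq> {x. \<forall>i. x i \<in> set_pmf (Dd i)}"
  unfolding prod_dist_def by (auto simp: set_Pi_pmf PiE_dflt_def)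

lemma set_res: "y \<in> set_pmf (resample Dd U x) \<Longrightarrow> (\<forall>i. i \<in> U \<longrightarrow> y i \<in> set_pmf (Dd i)) \<and> (\<forall>i. i \<notin> U \<longrightarrow> y i = x i)"
  using set_D[of Dd] by (auto simp: resample_def)

lemma res_cong: "(\<And>i. i \<notin> U \<Longrightarrow> x i = x' i) \<Longrightarrow> resample Dd U x = resample Dd U x'"
  unfolding resample_def by (intro map_pmf_cong refl) (auto simp: fun_eq_iff)

lemma pmf_integral_cong:
  fixes f g :: "'b \<Rightarrow> real"
  shows "(\<And>x. x \<in> set_pmf M \<Longrightarrow> f x = g x) \<Longrightarrow>
   measure_pmf.expectation M f = measure_pmf.expectation M g"
  by (rule integral_cong_AE) (auto simp: AE_measure_pmf_iff)

lemma prob_bind_pmf: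
  "measure_pmf.prob (bind_pmf M f) X = measure_pmf.expectation M (\<lambda>x. measure_pmf.prob (f x) X)"
  using pmf_integral_bind[of "indicator X" 1 M f] by simp

lemma pmf_dominated:
  fixes s :: "nat \<Rightarrow> 'b \<Rightarrow> real"
  assumes "\<And>x. x \<in> set_pmf M \<Longrightarrow> (\<lambda>i. s i x) \<longlonglongrightarrow> f x"
    and "\<And>i x. \<bar>s i x\<bar> \<le> B"
  shows "(\<lambda>i. measure_pmf.expectation M (s i)) \<longlonglongrightarrow> measure_pmf.expectation M f"
  by (rule integral_dominated_convergence[where w="\<lambda>_. B"])
     (use assms in \<open>auto simp: AE_measure_pmf_iff\<close>)

lemma pmf_integral_abs_le:
  fixes f :: "'b \<Rightarrow> real"
  assumes "\<And>x. \<bar>f x\<bar> \<le> B"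
  shows "\<bar>measure_pmf.expectation M f\<bar> \<le> B"
proof -
  have "\<bar>measure_pmf.expectation M f\<bar> \<le> measure_pmf.expectation M (\<lambda>x. norm (f x))"
    using integral_norm_bound[of M f] by simp
  also have "\<dots> \<le> measure_pmf.expectation M (\<lambda>x. B)"
    by (rule integral_mono) (use assms in \<open>auto intro: pmf_integrable_bdd[where B=B]\<close>)
  also have "\<dots> = B" by simp
  finally show ?thesis .
qed

lemma measure_cond_pmf':
  assumes "set_pmf p \<inter> s \<noteq> {}"
  shows "measure_pmf.prob (cond_pmf p s) A = measure_pmf.prob p (s \<inter> A) / measure_pmf.prob p s"
  using cond_pmf.rep_eq[OF assms] emeasure_measure_pmf_not_zero[OF assms]
  by (simp add: measure_pmf.emeasure_eq_measure)

locale prs =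
  fixes Dd :: "'i::finite \<Rightarrow> 'a pmf"
    and V :: "'i \<Rightarrow> 'a set"
    and S :: "'c::finite \<Rightarrow> 'i set"
    and phi :: "'c \<Rightarrow> ('i \<Rightarrow> 'a) \<Rightarrow> bool"
  assumes dist_on_dom: "\<And>i. set_pmf (Dd i) \<subseteq> V i"
    and scope_nonempty: "\<And>k. S k \<noteq> {}"
    and clause_local: "\<And>k x y. (\<forall>i. x i \<in> V i) \<Longrightarrow> (\<forall>i. y i \<in> V i) \<Longrightarrow>
                          (\<forall>i\<in>S k. x i = y i) \<Longrightarrow> phi k x = phi k y"
    and extremal: "extremal V S phi"
    and satisfiable: "measure_pmf.prob (prod_dist Dd) {x. formula phi x} > 0"
begin

abbreviation "D \<equiv> prod_dist Dd"
abbreviation "res \<equiv> resample Dd"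
definition "Good = {x. \<forall>i. x i \<in> set_pmf (Dd i)}"
abbreviation "Phi \<equiv> formula phi"

lemma set_D_Good: "x \<in> set_pmf D \<Longrightarrow> x \<in> Good"
  using set_D[of Dd] by (auto simp: Good_def)

lemma set_res_Good: "x \<in> Good \<Longrightarrow> y \<in> set_pmf (res U x) \<Longrightarrow> y \<in> Good"
  using set_res[of y Dd U x] by (auto simp: Good_def)

lemma set_res_eq: "y \<in> set_pmf (res U x) \<Longrightarrow> i \<notin> U \<Longrightarrow> y i = x i"
  using set_res[of y Dd U x] by auto

lemma local_good: "x \<in> Good \<Longrightarrow> y \<in> Good \<Longrightarrow> (\<And>i. i \<in> S k \<Longrightarrow> x i = y i) \<Longrightarrow> phi k x = phi k y"
  by (rule clause_local) (use dist_on_dom in \<open>force simp: Good_def\<close>)+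

lemma extremal_good: "x \<in> Good \<Longrightarrow> k \<noteq> l \<Longrightarrow> S k \<inter> S l \<noteq> {} \<Longrightarrow> phi k x \<or> phi l x"
proof -
  assume x: "x \<in> Good" and kl: "k \<noteq> l" "S k \<inter> S l \<noteq> {}"
  have "\<forall>i. x i \<in> V i" using x dist_on_dom by (auto simp: Good_def)
  then show ?thesis using extremal kl unfolding extremal_def by blast
qed

lemma disj_false: "x \<in> Good \<Longrightarrow> \<not> phi k x \<Longrightarrow> \<not> phi l x \<Longrightarrow> k \<noteq> l \<Longrightarrow> S k \<inter> S l = {}"
  using extremal_good[of x k l] by blast

lemma stays_false: "x \<in> Good \<Longrightarrow> \<not> phi l x \<Longrightarrow> S l \<inter> A = {} \<Longrightarrow> y \<in> set_pmf (res A x) \<Longrightarrow> \<not> phi l y"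
proof -
  assume x: "x \<in> Good" and l: "\<not> phi l x" and d: "S l \<inter> A = {}" and y: "y \<in> set_pmf (res A x)"
  have "phi l x = phi l y"
  proof (rule local_good[OF x set_res_Good[OF x y]])
    fix i assume "i \<in> S l"
    then have "i \<notin> A" using d by blast
    then show "x i = y i" using set_res_eq[OF y] by simp
  qed
  then show ?thesis using l by simp
qed

primrec Q :: "nat \<Rightarrow> ('i \<Rightarrow> 'a) \<Rightarrow> ('i \<Rightarrow> 'a) option pmf" where
  "Q 0 x = return_pmf (if Phi x then Some x else None)"
| "Q (Suc t) x = (if Phi x then return_pmf (Some x) else bind_pmf (res (S (SOME k. \<not> phi k x)) x) (Q t))"

lemma Q_sat: "Phi x \<Longrightarrow> Q t x = return_pmf (Some x)"
  by (cases t) auto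

lemma some_false: "\<not> Phi x \<Longrightarrow> \<not> phi (SOME k. \<not> phi k x) x"
  unfolding formula_def by (rule someI_ex) auto

lemma Q0_false: "\<not> phi l y \<Longrightarrow> Q 0 y = return_pmf None"
  by (auto simp: formula_def)

lemma Comm: "x \<in> Good \<Longrightarrow> \<not> phi k x \<Longrightarrow> \<not> phi l x \<Longrightarrow>
   bind_pmf (res (S k) x) (Q t) = bind_pmf (res (S l) x) (Q t)"
proof (induction t arbitrary: x k l)
  case 0
  show ?case
  proof (cases "k = l")
    case False
    have d: "S k \<inter> S l = {}" using disj_false[OF 0 False] .
    have "bind_pmf (res (S k) x) (Q 0) = bind_pmf (res (S k) x) (\<lambda>_. return_pmf None)"
      using stays_false[OF 0(1) 0(3) _] d
      by (intro bind_pmf_cong refl Q0_false) (auto simp: Int_commute)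
    moreover have "bind_pmf (res (S l) x) (Q 0) = bind_pmf (res (S l) x) (\<lambda>_. return_pmf None)"
      using stays_false[OF 0(1) 0(2) _] d
      by (intro bind_pmf_cong refl Q0_false) auto
    ultimately show ?thesis by (simp only:) simp
  qed simp
next
  case (Suc t)
  have key: "bind_pmf (res (S k) x) (Q (Suc t)) = bind_pmf (res (S k \<union> S l) x) (Q t)"
    if x: "x \<in> Good" and k: "\<not> phi k x" and l: "\<not> phi l x" and kl: "k \<noteq> l" for x k l
  proof -
    have d: "S l \<inter> S k = {}" using disj_false[OF x l k] kl by blast
    have "bind_pmf (res (S k) x) (Q (Suc t)) = bind_pmf (res (S k) x) (\<lambda>y. bind_pmf (res (S l) y) (Q t))"
    proof (intro bind_pmf_cong refl)
      fix y assume y: "y \<in> set_pmf (res (S k) x)"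
      have yl: "\<not> phi l y" using stays_false[OF x l d y] .
      have yG: "y \<in> Good" using set_res_Good[OF x y] .
      have nP: "\<not> Phi y" using yl by (auto simp: formula_def)
      show "Q (Suc t) y = bind_pmf (res (S l) y) (Q t)"
        using Suc.IH[OF yG some_false[OF nP] yl] nP by simp
    qed
    also have "\<dots> = bind_pmf (res (S k \<union> S l) x) (Q t)"
      by (simp add: bind_assoc_pmf[symmetric] res_comp)
    finally show ?thesis .
  qed
  show ?case
  proof (cases "k = l")
    case False
    then show ?thesis using key[OF Suc.prems] key[OF Suc.prems(1,3,2)] by (simp add: Un_commute del: Q.simps)
  qed simp
qed

lemma Q_Suc_any: "x \<in> Good \<Longrightarrow> \<not> phi k x \<Longrightarrow> Q (Suc t) x = bind_pmf (res (S k) x) (Q t)"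
proof -
  assume x: "x \<in> Good" and k: "\<not> phi k x"
  then have nP: "\<not> Phi x" by (auto simp: formula_def)
  then show ?thesis using Comm[OF x some_false[OF nP] k] by simp
qed

definition "Fset x = {k. \<not> phi k x}"
definition "U G = \<Union> (S ` G)"

lemma Bulk: "finite G \<Longrightarrow> x \<in> Good \<Longrightarrow> G \<subseteq> Fset x \<Longrightarrow> Q (t + card G) x = bind_pmf (res (U G) x) (Q t)"
proof (induction G arbitrary: x rule: finite_induct)
  case empty
  then show ?case by (simp add: U_def res_empty bind_return_pmf)
next
  case (insert k G)
  have x: "x \<in> Good" and k: "\<not> phi k x" and G: "G \<subseteq> Fset x" using insert by (auto simp: Fset_def)
  have "Q (t + card (insert k G)) x = Q (Suc (t + card G)) x" using insert by simp
  also have "\<dots> = bind_pmf (res (S k) x) (Q (t + card G))" by (rule Q_Suc_any[OF x k])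
  also have "\<dots> = bind_pmf (res (S k) x) (\<lambda>y. bind_pmf (res (U G) y) (Q t))"
  proof (intro bind_pmf_cong refl)
    fix y assume y: "y \<in> set_pmf (res (S k) x)"
    have "G \<subseteq> Fset y"
    proof
      fix j assume j: "j \<in> G"
      then have jx: "\<not> phi j x" and jk: "j \<noteq> k" using G insert by (auto simp: Fset_def)
      have "S j \<inter> S k = {}" using disj_false[OF x jx k jk] .
      then show "j \<in> Fset y" using stays_false[OF x jx _ y] by (simp add: Fset_def)
    qed
    then show "Q (t + card G) y = bind_pmf (res (U G) y) (Q t)" using insert(3)[OF set_res_Good[OF x y]] by simp
  qed
  also have "\<dots> = bind_pmf (res (U (insert k G)) x) (Q t)"
    by (simp add: bind_assoc_pmf[symmetric] res_comp U_def)
  finally show ?case .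
qed

definition "Pt t x A = measure_pmf.prob (Q t x) (Some ` A)"

lemma Pt_bounds: "0 \<le> Pt t x A" "Pt t x A \<le> 1" "\<bar>Pt t x A\<bar> \<le> 1"
  by (auto simp: Pt_def)

lemma Pt_sat: "Phi x \<Longrightarrow> Pt t x A = indicator A x"
  by (auto simp: Pt_def Q_sat indicator_def)

lemma Pt_mono: "x \<in> Good \<Longrightarrow> Pt t x A \<le> Pt (Suc t) x A"
proof (induction t arbitrary: x)
  case 0
  then show ?case by (cases "Phi x") (auto simp: Pt_def)
next
  case (Suc t)
  show ?case
  proof (cases "Phi x")
    case False
    let ?k = "SOME k. \<not> phi k x"
    have "Pt (Suc t) x A = measure_pmf.expectation (res (S ?k) x) (\<lambda>y. Pt t y A)"
      using False by (simp add: Pt_def prob_bind_pmf)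
    also have "\<dots> \<le> measure_pmf.expectation (res (S ?k) x) (\<lambda>y. Pt (Suc t) y A)"
      by (rule integral_mono_AE) (auto intro!: pmf_integrable_bdd[where B=1] Pt_bounds Suc.IH 
            simp: AE_measure_pmf_iff intro: set_res_Good[OF Suc.prems])
    also have "\<dots> = Pt (Suc (Suc t)) x A"
      using False by (simp add: Pt_def prob_bind_pmf)
    finally show ?thesis .
  qed (simp add: Pt_sat)
qed

definition "L x A = (SUP t. Pt t x A)"

lemma Pt_L: "x \<in> Good \<Longrightarrow> (\<lambda>t. Pt t x A) \<longlonglongrightarrow> L x A"
  unfolding L_def
  by (rule LIMSEQ_incseq_SUP) (auto intro!: bdd_aboveI[where M=1] Pt_bounds incseq_SucI Pt_mono)

lemma L_sat: "Phi x \<Longrightarrow> L x A = indicator A x"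
  by (simp add: L_def Pt_sat)

lemma L_rec: "x \<in> Good \<Longrightarrow> \<not> Phi x \<Longrightarrow>
  L x A = measure_pmf.expectation (res (U (Fset x)) x) (\<lambda>y. L y A)"
proof -
  assume x: "x \<in> Good" and nP: "\<not> Phi x"
  let ?n = "card (Fset x)"
  have eq: "Pt (t + ?n) x A = measure_pmf.expectation (res (U (Fset x)) x) (\<lambda>y. Pt t y A)" for t
    using Bulk[OF finite x subset_refl, of t] by (simp add: Pt_def prob_bind_pmf)
  have "(\<lambda>t. Pt (t + ?n) x A) \<longlonglongrightarrow> L x A"
    using LIMSEQ_ignore_initial_segment[OF Pt_L[OF x], of ?n] .
  moreover have "(\<lambda>t. Pt (t + ?n) x A) \<longlonglongrightarrow> measure_pmf.expectation (res (U (Fset x)) x) (\<lambda>y. L y A)"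
    unfolding eq by (rule pmf_dominated[where B=1]) (auto intro: Pt_L set_res_Good[OF x] Pt_bounds)
  ultimately show ?thesis by (rule LIMSEQ_unique)
qed

lemma L_bounds: "0 \<le> L x A \<and> L x A \<le> 1"
proof
  have "Pt 0 x A \<le> L x A" unfolding L_def
    by (rule cSUP_upper) (auto intro!: bdd_aboveI[where M=1] Pt_bounds)
  then show "0 \<le> L x A" using Pt_bounds(1)[of 0 x A] by linarith
  show "L x A \<le> 1" unfolding L_def by (rule cSUP_least) (auto intro: Pt_bounds)
qed

lemma L_abs: "\<bar>L x A\<bar> \<le> 1" using L_bounds[of x A] by auto

lemma G_lemma:
  fixes h :: "('i \<Rightarrow> 'a) \<Rightarrow> real"
  assumes Binv: "\<And>x y. x \<in> Good \<Longrightarrow> y \<in> Good \<Longrightarrow> (\<And>i. i \<notin> R \<Longrightarrow> x i = y i) \<Longrightarrow> (x \<in> B \<longleftrightarrow> y \<in> B)"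
    and hb: "\<And>y. \<bar>h y\<bar> \<le> 1"
  shows "measure_pmf.expectation D (\<lambda>x. indicator B x * measure_pmf.expectation (res R x) h)
       = measure_pmf.expectation D (\<lambda>x. indicator B x * h x)"
proof -
  have b: "\<bar>indicator B y * h y\<bar> \<le> 1" for y using hb[of y] by (auto simp: indicator_def)
  have "measure_pmf.expectation D (\<lambda>x. indicator B x * h x) =
        measure_pmf.expectation (bind_pmf D (res R)) (\<lambda>x. indicator B x * h x)"
    by (simp add: bind_D_res)
  also have "\<dots> = measure_pmf.expectation D (\<lambda>x. measure_pmf.expectation (res R x) (\<lambda>y. indicator B y * h y))"
    by (rule pmf_integral_bind[OF b])
  also have "\<dots> = measure_pmf.expectation D (\<lambda>x. indicator B x * measure_pmf.expectation (res R x) h)"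
  proof (rule pmf_integral_cong)
    fix x assume x: "x \<in> set_pmf D"
    have xg: "x \<in> Good" using set_D_Good[OF x] .
    have "measure_pmf.expectation (res R x) (\<lambda>y. indicator B y * h y) =
          measure_pmf.expectation (res R x) (\<lambda>y. indicator B x * h y)"
    proof (rule pmf_integral_cong)
      fix y assume y: "y \<in> set_pmf (res R x)"
      have "y \<in> B \<longleftrightarrow> x \<in> B"
        by (rule Binv[OF set_res_Good[OF xg y] xg]) (rule set_res_eq[OF y])
      then show "indicator B y * h y = indicator B x * h y" by (simp add: indicator_def)
    qed
    then show "measure_pmf.expectation (res R x) (\<lambda>y. indicator B y * h y) =
          indicator B x * measure_pmf.expectation (res R x) h" by simp
  qed
  finally show ?thesis ..
qed

lemma I_lemma:
  fixes k :: "('i \<Rightarrow> 'a) \<Rightarrow> real"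
  assumes Binv: "\<And>x y. x \<in> Good \<Longrightarrow> y \<in> Good \<Longrightarrow> (\<And>i. i \<in> R \<Longrightarrow> x i = y i) \<Longrightarrow> (x \<in> B \<longleftrightarrow> y \<in> B)"
    and kinv: "\<And>x y. x \<in> Good \<Longrightarrow> y \<in> Good \<Longrightarrow> (\<And>i. i \<notin> R \<Longrightarrow> x i = y i) \<Longrightarrow> k x = k y"
    and kb: "\<And>y. \<bar>k y\<bar> \<le> 1"
  shows "measure_pmf.expectation D (\<lambda>x. indicator B x * k x)
       = measure_pmf.prob D B * measure_pmf.expectation D k"
proof -
  have b: "\<bar>indicator B y * k y\<bar> \<le> 1" for y using kb[of y] by (auto simp: indicator_def)
  have "measure_pmf.expectation D (\<lambda>x. indicator B x * k x) =
        measure_pmf.expectation (bind_pmf D (res R)) (\<lambda>x. indicator B x * k x)"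
    by (simp add: bind_D_res)
  also have "\<dots> = measure_pmf.expectation D (\<lambda>x. measure_pmf.expectation (res R x) (\<lambda>y. indicator B y * k y))"
    by (rule pmf_integral_bind[OF b])
  also have "\<dots> = measure_pmf.expectation D (\<lambda>x. measure_pmf.prob D B * k x)"
  proof (rule pmf_integral_cong)
    fix x assume x: "x \<in> set_pmf D"
    have xg: "x \<in> Good" using set_D_Good[OF x] .
    have "measure_pmf.expectation (res R x) (\<lambda>y. indicator B y * k y) =
          measure_pmf.expectation (res R x) (\<lambda>y. indicator B y * k x)"
    proof (rule pmf_integral_cong)
      fix y assume y: "y \<in> set_pmf (res R x)"
      have "k y = k x"
        by (rule kinv[OF set_res_Good[OF xg y] xg]) (rule set_res_eq[OF y])
      then show "indicator B y * k y = indicator B y * k x" by simp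
    qed
    also have "\<dots> = measure_pmf.prob (res R x) B * k x" by simp
    also have "measure_pmf.prob (res R x) B = measure_pmf.prob D B"
    proof -
      let ?m = "\<lambda>z i. if i \<in> R then z i else x i"
      have "measure_pmf.prob (res R x) B = measure_pmf.prob D (?m -` B)"
        by (simp add: resample_def)
      also have "\<dots> = measure_pmf.prob D (?m -` B \<inter> set_pmf D)"
        by (simp add: measure_Int_set_pmf)
      also have "?m -` B \<inter> set_pmf D = B \<inter> set_pmf D"
      proof (intro equalityI subsetI)
        fix z assume z: "z \<in> ?m -` B \<inter> set_pmf D"
        have zg: "z \<in> Good" using set_D_Good z by blast
        have mg: "?m z \<in> Good" using zg xg by (auto simp: Good_def)
        have "?m z \<in> B \<longleftrightarrow> z \<in> B" by (rule Binv[OF mg zg]) simp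
        then show "z \<in> B \<inter> set_pmf D" using z by blast
      next
        fix z assume z: "z \<in> B \<inter> set_pmf D"
        have zg: "z \<in> Good" using set_D_Good z by blast
        have mg: "?m z \<in> Good" using zg xg by (auto simp: Good_def)
        have "?m z \<in> B \<longleftrightarrow> z \<in> B" by (rule Binv[OF mg zg]) simp
        then show "z \<in> ?m -` B \<inter> set_pmf D" using z by blast
      qed
      also have "measure_pmf.prob D (B \<inter> set_pmf D) = measure_pmf.prob D B"
        by (simp add: measure_Int_set_pmf)
      finally show ?thesis .
    qed
    finally show "measure_pmf.expectation (res R x) (\<lambda>y. indicator B y * k y) =
          measure_pmf.prob D B * k x" by simp
  qed
  also have "\<dots> = measure_pmf.prob D B * measure_pmf.expectation D k" by simp
  finally show ?thesis .
qed

definition "C R = {x. \<forall>k. S k \<subseteq> - R \<longrightarrow> phi k x}"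
definition "Bad F = {x. \<forall>k\<in>F. \<not> phi k x}"
definition "Fam R = {F. F \<noteq> {} \<and> (\<forall>k\<in>F. \<not> S k \<subseteq> - R)}"

lemma Fset_char: "x \<in> Good \<Longrightarrow> (x \<in> Bad F \<and> x \<in> C (U F)) \<longleftrightarrow> F = Fset x"
proof
  assume x: "x \<in> Good" and h: "x \<in> Bad F \<and> x \<in> C (U F)"
  show "F = Fset x"
  proof (intro equalityI subsetI)
    fix k assume "k \<in> F" then show "k \<in> Fset x" using h by (auto simp: Bad_def Fset_def)
  next
    fix k assume k: "k \<in> Fset x"
    show "k \<in> F"
    proof (rule ccontr)
      assume kF: "k \<notin> F"
      show False
      proof (cases "S k \<subseteq> - U F")
        case True then show False using h k by (auto simp: C_def Fset_def)
      next
        case False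
        then obtain j where j: "j \<in> F" "S k \<inter> S j \<noteq> {}" by (auto simp: U_def)
        have "j \<noteq> k" using j kF by blast
        then show False using extremal_good[OF x, of k j] j h k by (auto simp: Bad_def Fset_def)
      qed
    qed
  qed
next
  assume x: "x \<in> Good" and F: "F = Fset x"
  show "x \<in> Bad F \<and> x \<in> C (U F)"
  proof
    show "x \<in> Bad F" using F by (auto simp: Bad_def Fset_def)
    show "x \<in> C (U F)" unfolding C_def
    proof (intro CollectI allI impI)
      fix k assume k: "S k \<subseteq> - U F"
      show "phi k x"
      proof (rule ccontr)
        assume "\<not> phi k x"
        then have "k \<in> F" using F by (auto simp: Fset_def)
        then have "S k \<subseteq> U F" by (auto simp: U_def)
        then show False using k scope_nonempty[of k] by blast
      qed
    qed
  qed
qed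

lemma C_Fam: "\<not> Phi x \<Longrightarrow> x \<in> C R \<longleftrightarrow> Fset x \<in> Fam R"
  by (auto simp: C_def Fam_def Fset_def formula_def)

lemma Phi_C: "Phi x \<Longrightarrow> x \<in> C R"
  by (auto simp: C_def formula_def)

lemma Phi_Bad: "Phi x \<Longrightarrow> F \<noteq> {} \<Longrightarrow> x \<notin> Bad F"
  by (auto simp: Bad_def formula_def)

lemma Bad_inv: "x \<in> Good \<Longrightarrow> y \<in> Good \<Longrightarrow> (\<And>i. i \<in> U F \<Longrightarrow> x i = y i) \<Longrightarrow> (x \<in> Bad F \<longleftrightarrow> y \<in> Bad F)"
proof -
  assume x: "x \<in> Good" and y: "y \<in> Good" and e: "\<And>i. i \<in> U F \<Longrightarrow> x i = y i"
  have "phi k x = phi k y" if "k \<in> F" for k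
    by (rule local_good[OF x y]) (use that e in \<open>auto simp: U_def\<close>)
  then show ?thesis by (auto simp: Bad_def)
qed

lemma C_inv: "x \<in> Good \<Longrightarrow> y \<in> Good \<Longrightarrow> (\<And>i. i \<notin> R \<Longrightarrow> x i = y i) \<Longrightarrow> (x \<in> C R \<longleftrightarrow> y \<in> C R)"
proof -
  assume x: "x \<in> Good" and y: "y \<in> Good" and e: "\<And>i. i \<notin> R \<Longrightarrow> x i = y i"
  have "phi k x = phi k y" if "S k \<subseteq> - R" for k
    by (rule local_good[OF x y]) (use that e in \<open>auto\<close>)
  then show ?thesis by (auto simp: C_def)
qed

lemma Rec:
  fixes g h :: "('i \<Rightarrow> 'a) \<Rightarrow> real"
  assumes g_rec: "\<And>x. x \<in> Good \<Longrightarrow> \<not> Phi x \<Longrightarrow> g x = measure_pmf.expectation (res (U (Fset x)) x) g"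
    and g_sat: "\<And>x. Phi x \<Longrightarrow> g x = h x"
    and gb: "\<And>x. \<bar>g x\<bar> \<le> 1" and hb: "\<And>x. \<bar>h x\<bar> \<le> 1"
  shows "measure_pmf.expectation D (\<lambda>x. indicator (C R) x * g x) =
    measure_pmf.expectation D (\<lambda>x. indicator {x. Phi x} x * h x) +
    (\<Sum>F\<in>Fam R. measure_pmf.prob D (Bad F) * measure_pmf.expectation D (\<lambda>x. indicator (C (U F)) x * g x))"
proof -
  define kk where "kk F x = indicator (C (U F)) x * measure_pmf.expectation (res (U F) x) g" for F x
  have kkb: "\<bar>kk F x\<bar> \<le> 1" for F x
    using pmf_integral_abs_le[OF gb, of "res (U F) x"] by (auto simp: kk_def indicator_def)
  have pw: "indicator (C R) x * g x = indicator {x. Phi x} x * h x + (\<Sum>F\<in>Fam R. indicator (Bad F) x * kk F x)"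
    if x: "x \<in> Good" for x
  proof (cases "Phi x")
    case True
    have "(\<Sum>F\<in>Fam R. indicator (Bad F) x * kk F x) = 0"
      by (rule sum.neutral) (use Phi_Bad[OF True] in \<open>auto simp: Fam_def\<close>)
    then show ?thesis using True Phi_C[OF True, of R] g_sat[OF True] by simp
  next
    case False
    have "(\<Sum>F\<in>Fam R. indicator (Bad F) x * kk F x) =
          (\<Sum>F\<in>Fam R. if F = Fset x then measure_pmf.expectation (res (U (Fset x)) x) g else 0)"
    proof (rule sum.cong[OF refl])
      fix F assume "F \<in> Fam R"
      show "indicator (Bad F) x * kk F x = (if F = Fset x then measure_pmf.expectation (res (U (Fset x)) x) g else 0)"
        using Fset_char[OF x, of F] by (auto simp: kk_def indicator_def)
    qed
    also have "\<dots> = (if Fset x \<in> Fam R then measure_pmf.expectation (res (U (Fset x)) x) g else 0)"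
      by (simp add: sum.delta')
    finally show ?thesis using False C_Fam[OF False, of R] g_rec[OF x False] by (simp add: indicator_def)
  qed
  have "measure_pmf.expectation D (\<lambda>x. indicator (C R) x * g x) =
        measure_pmf.expectation D (\<lambda>x. indicator {x. Phi x} x * h x + (\<Sum>F\<in>Fam R. indicator (Bad F) x * kk F x))"
    by (rule pmf_integral_cong) (use pw set_D_Good in blast)
  also have "\<dots> = measure_pmf.expectation D (\<lambda>x. indicator {x. Phi x} x * h x) +
      (\<Sum>F\<in>Fam R. measure_pmf.expectation D (\<lambda>x. indicator (Bad F) x * kk F x))"
  proof -
    have i1: "integrable D (\<lambda>x. indicator {x. Phi x} x * h x)"
      by (rule pmf_integrable_bdd[where B=1]) (use hb in \<open>auto simp: indicator_def\<close>)
    have i2: "integrable D (\<lambda>x. indicator (Bad F) x * kk F x)" for F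
      by (rule pmf_integrable_bdd[where B=1]) (use kkb in \<open>auto simp: indicator_def\<close>)
    show ?thesis
      apply (subst Bochner_Integration.integral_add[OF i1])
       apply (rule Bochner_Integration.integrable_sum, rule i2)
      apply (subst Bochner_Integration.integral_sum)
       apply (rule i2)
      apply (rule refl)
      done
  qed
  also have "(\<Sum>F\<in>Fam R. measure_pmf.expectation D (\<lambda>x. indicator (Bad F) x * kk F x)) =
     (\<Sum>F\<in>Fam R. measure_pmf.prob D (Bad F) * measure_pmf.expectation D (\<lambda>x. indicator (C (U F)) x * g x))"
  proof (rule sum.cong[OF refl])
    fix F
    have "measure_pmf.expectation D (\<lambda>x. indicator (Bad F) x * kk F x) =
          measure_pmf.prob D (Bad F) * measure_pmf.expectation D (kk F)"
    proof (rule I_lemma[where R="U F"])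
      show "\<And>x y. x \<in> Good \<Longrightarrow> y \<in> Good \<Longrightarrow> (\<And>i. i \<in> U F \<Longrightarrow> x i = y i) \<Longrightarrow> (x \<in> Bad F \<longleftrightarrow> y \<in> Bad F)"
        by (rule Bad_inv)
      show "\<And>x y. x \<in> Good \<Longrightarrow> y \<in> Good \<Longrightarrow> (\<And>i. i \<notin> U F \<Longrightarrow> x i = y i) \<Longrightarrow> kk F x = kk F y"
      proof -
        fix x y assume x: "x \<in> Good" and y: "y \<in> Good" and e: "\<And>i. i \<notin> U F \<Longrightarrow> x i = y i"
        have "x \<in> C (U F) \<longleftrightarrow> y \<in> C (U F)" by (rule C_inv[OF x y e])
        moreover have "res (U F) x = res (U F) y" by (rule res_cong) (rule e)
        ultimately show "kk F x = kk F y" by (simp add: kk_def indicator_def)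
      qed
      show "\<And>y. \<bar>kk F y\<bar> \<le> 1" by (rule kkb)
    qed
    also have "measure_pmf.expectation D (kk F) = measure_pmf.expectation D (\<lambda>x. indicator (C (U F)) x * g x)"
      unfolding kk_def by (rule G_lemma[OF C_inv gb])
    finally show "measure_pmf.expectation D (\<lambda>x. indicator (Bad F) x * kk F x) =
       measure_pmf.prob D (Bad F) * measure_pmf.expectation D (\<lambda>x. indicator (C (U F)) x * g x)" .
  qed
  finally show ?thesis .
qed

lemma E_ind2: "measure_pmf.expectation M (\<lambda>x. indicator X x * indicator Y x) = measure_pmf.prob M (X \<inter> Y)"
  by (simp add: indicator_inter_arith[symmetric])

lemma E_ind1: "measure_pmf.expectation M (\<lambda>x. indicator X x * (1::real)) = measure_pmf.prob M X"
  by simp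

lemma C_UNIV: "C UNIV = UNIV"
  using scope_nonempty by (auto simp: C_def)

lemma main_limit:
  "measure_pmf.expectation D (\<lambda>x. L x A) = measure_pmf.prob D ({x. Phi x} \<inter> A) / measure_pmf.prob D {x. Phi x}"
proof -
  define p where "p = measure_pmf.prob D {x. Phi x}"
  have p: "p > 0" using satisfiable by (simp add: p_def)
  define q where "q = measure_pmf.prob D ({x. Phi x} \<inter> A) / p"
  define a where "a R = measure_pmf.expectation D (\<lambda>x. indicator (C R) x * L x A)" for R
  define c where "c R = measure_pmf.expectation D (\<lambda>x. indicator (C R) x * (1::real))" for R
  define \<beta> where "\<beta> F = measure_pmf.prob D (Bad F)" for F
  define e where "e R = a R - q * c R" for R
  have \<beta>: "\<beta> F \<ge> 0" for F by (simp add: \<beta>_def)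
  have recA: "a R = measure_pmf.prob D ({x. Phi x} \<inter> A) + (\<Sum>F\<in>Fam R. \<beta> F * a (U F))" for R
    unfolding a_def \<beta>_def E_ind2[symmetric]
    by (rule Rec) (auto intro: L_rec L_sat L_abs)
  have recC: "c R = p + (\<Sum>F\<in>Fam R. \<beta> F * c (U F))" for R
    using Rec[of "\<lambda>_. 1" "\<lambda>_. 1" R] by (simp add: c_def \<beta>_def p_def)
  have cval: "c R = measure_pmf.prob D (C R)" for R by (simp add: c_def)
  have cp: "c R \<ge> p" for R
    unfolding cval p_def by (rule measure_pmf.finite_measure_mono) (auto intro: Phi_C)
  have c1: "c R \<le> 1" for R unfolding cval by simp
  have cpos: "c R > 0" for R using cp[of R] p by linarith
  have erec: "e R = (\<Sum>F\<in>Fam R. \<beta> F * e (U F))" for R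
  proof -
    have "e R = measure_pmf.prob D ({x. Phi x} \<inter> A) - q * p + (\<Sum>F\<in>Fam R. \<beta> F * a (U F)) - q * (\<Sum>F\<in>Fam R. \<beta> F * c (U F))"
      unfolding e_def by (subst recA, subst recC) (simp add: algebra_simps)
    also have "measure_pmf.prob D ({x. Phi x} \<inter> A) - q * p = 0" using p by (simp add: q_def)
    finally show ?thesis
      by (simp add: e_def sum_subtractf sum_distrib_left algebra_simps)
  qed
  have sumc: "(\<Sum>F\<in>Fam R. \<beta> F * c (U F)) = c R - p" for R using recC[of R] by simp
  define M where "M = Max (range (\<lambda>R. \<bar>e R\<bar> / c R))"
  have Mge: "\<bar>e R\<bar> / c R \<le> M" for R unfolding M_def by (rule Max_ge) auto
  have Mge': "\<bar>e R\<bar> \<le> M * c R" for R using Mge[of R] cpos[of R] by (simp add: divide_le_eq)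
  have M0: "M \<ge> 0" using Mge[of UNIV] cpos[of UNIV] by (smt (verit) divide_nonneg_pos)
  have bound: "\<bar>e R\<bar> \<le> M * (c R - p)" for R
  proof -
    have "\<bar>e R\<bar> \<le> (\<Sum>F\<in>Fam R. \<bar>\<beta> F * e (U F)\<bar>)" unfolding erec[of R] by (rule sum_abs)
    also have "\<dots> \<le> (\<Sum>F\<in>Fam R. \<beta> F * (M * c (U F)))"
      by (rule sum_mono) (simp add: abs_mult \<beta> mult_left_mono Mge')
    also have "\<dots> = M * (c R - p)" by (simp add: sumc[symmetric] sum_distrib_left algebra_simps)
    finally show ?thesis .
  qed
  have "M \<in> range (\<lambda>R. \<bar>e R\<bar> / c R)" unfolding M_def by (rule Max_in) auto
  then obtain R0 where R0: "M = \<bar>e R0\<bar> / c R0" by blast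
  have "M * c R0 = \<bar>e R0\<bar>" using R0 cpos[of R0] by simp
  then have "M * c R0 \<le> M * (c R0 - p)" using bound[of R0] by simp
  then have "M * p \<le> 0" by (simp add: algebra_simps)
  then have "M = 0" using M0 p by (smt (verit) mult_pos_pos)
  then have "e UNIV = 0" using Mge'[of UNIV] by simp
  then have "a UNIV = q * c UNIV" by (simp add: e_def)
  moreover have "c UNIV = 1" by (simp add: cval C_UNIV)
  moreover have "a UNIV = measure_pmf.expectation D (\<lambda>x. L x A)" by (simp add: a_def C_UNIV)
  ultimately show ?thesis by (simp add: q_def p_def)
qed

primrec run' :: "(('i, 'a, 'c) history \<Rightarrow> 'c pmf) \<Rightarrow> ('i, 'a, 'c) history \<Rightarrow> nat \<Rightarrow> ('i, 'a, 'c) history pmf" where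
  "run' sel h 0 = return_pmf h"
| "run' sel h (Suc t) = bind_pmf (prs_step phi Dd S sel h) (\<lambda>h'. run' sel h' t)"

lemma run'_Suc': "run' sel h (Suc t) = bind_pmf (run' sel h t) (prs_step phi Dd S sel)"
proof (induction t arbitrary: h)
  case 0
  then show ?case by (simp add: bind_return_pmf bind_return_pmf')
next
  case (Suc t)
  have "run' sel h (Suc (Suc t)) = bind_pmf (prs_step phi Dd S sel h) (\<lambda>h'. bind_pmf (run' sel h' t) (prs_step phi Dd S sel))"
    using Suc by simp
  also have "\<dots> = bind_pmf (run' sel h (Suc t)) (prs_step phi Dd S sel)"
    by (simp add: bind_assoc_pmf)
  finally show ?case .
qed

lemma prs_run_eq: "prs_run phi Dd S sel t = bind_pmf D (\<lambda>x. run' sel ([x], []) t)"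
proof (induction t)
  case 0
  then show ?case by (simp add: map_pmf_def)
next
  case (Suc t)
  then show ?case by (simp add: bind_assoc_pmf run'_Suc' del: run'.simps)
qed

definition "obs h = (if Phi (hd (fst h)) then Some (hd (fst h)) else None)"

lemma run_obs:
  assumes sel_false: "\<And>h. fst h \<noteq> [] \<Longrightarrow> \<not> Phi (hd (fst h)) \<Longrightarrow>
                          set_pmf (sel h) \<subseteq> {k. \<not> phi k (hd (fst h))}"
  shows "fst h \<noteq> [] \<Longrightarrow> hd (fst h) \<in> Good \<Longrightarrow> map_pmf obs (run' sel h t) = Q t (hd (fst h))"
proof (induction t arbitrary: h)
  case 0
  then show ?case by (simp add: obs_def)
next
  case (Suc t)
  define x where "x = hd (fst h)"
  have x: "x \<in> Good" using Suc.prems x_def by simp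
  show ?case
  proof (cases "Phi x")
    case True
    then have "run' sel h (Suc t) = run' sel h t"
      by (simp add: prs_step_def x_def bind_return_pmf)
    then show ?thesis using Suc.IH[OF Suc.prems] True Q_sat[OF True] by (simp add: x_def)
  next
    case False
    have "map_pmf obs (run' sel h (Suc t)) =
       bind_pmf (sel h) (\<lambda>k. bind_pmf (res (S k) x) (\<lambda>y. map_pmf obs (run' sel (y # fst h, k # snd h) t)))"
      using False by (simp add: prs_step_def x_def map_bind_pmf bind_assoc_pmf bind_map_pmf)
    also have "\<dots> = bind_pmf (sel h) (\<lambda>k. bind_pmf (res (S k) x) (Q t))"
    proof (intro bind_pmf_cong refl)
      fix k y assume y: "y \<in> set_pmf (res (S k) x)"
      show "map_pmf obs (run' sel (y # fst h, k # snd h) t) = Q t y"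
        using Suc.IH[of "(y # fst h, k # snd h)"] set_res_Good[OF x y] by simp
    qed
    also have "\<dots> = bind_pmf (sel h) (\<lambda>k. Q (Suc t) x)"
    proof (intro bind_pmf_cong refl)
      fix k assume k: "k \<in> set_pmf (sel h)"
      have "\<not> phi k x" using sel_false[OF Suc.prems(1)] False k by (auto simp: x_def)
      then show "bind_pmf (res (S k) x) (Q t) = Q (Suc t) x" using Q_Suc_any[OF x] by simp
    qed
    also have "\<dots> = Q (Suc t) x" by simp
    finally show ?thesis by (simp add: x_def)
  qed
qed

lemma prob_run:
  assumes sel_false: "\<And>h. fst h \<noteq> [] \<Longrightarrow> \<not> Phi (hd (fst h)) \<Longrightarrow>
                          set_pmf (sel h) \<subseteq> {k. \<not> phi k (hd (fst h))}"
  shows "measure_pmf.prob (prs_run phi Dd S sel t) {h. Phi (hd (fst h)) \<and> hd (fst h) \<in> A}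
     = measure_pmf.expectation D (\<lambda>x. Pt t x A)"
proof -
  have "{h. Phi (hd (fst h)) \<and> hd (fst h) \<in> A} = obs -` (Some ` A)"
    by (auto simp: obs_def split: if_splits)
  then have "measure_pmf.prob (prs_run phi Dd S sel t) {h. Phi (hd (fst h)) \<and> hd (fst h) \<in> A}
      = measure_pmf.prob (map_pmf obs (prs_run phi Dd S sel t)) (Some ` A)"
    unfolding measure_map_pmf by (rule arg_cong[where f="measure_pmf.prob (prs_run phi Dd S sel t)"])
  also have "map_pmf obs (prs_run phi Dd S sel t) = bind_pmf D (Q t)"
    unfolding prs_run_eq map_bind_pmf
    by (intro bind_pmf_cong refl) (simp add: run_obs[OF sel_false] set_D_Good)
  also have "measure_pmf.prob (bind_pmf D (Q t)) (Some ` A) = measure_pmf.expectation D (\<lambda>x. Pt t x A)"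
    by (simp add: prob_bind_pmf Pt_def)
  finally show ?thesis .
qed

lemma final_limit:
  assumes sel_false: "\<And>h. fst h \<noteq> [] \<Longrightarrow> \<not> Phi (hd (fst h)) \<Longrightarrow>
                          set_pmf (sel h) \<subseteq> {k. \<not> phi k (hd (fst h))}"
  shows "(\<lambda>t. measure_pmf.prob (prs_run phi Dd S sel t) {h. Phi (hd (fst h)) \<and> hd (fst h) \<in> A})
     \<longlonglongrightarrow> measure_pmf.prob D ({x. Phi x} \<inter> A) / measure_pmf.prob D {x. Phi x}"
proof -
  have e: "(\<lambda>t. measure_pmf.prob (prs_run phi Dd S sel t) {h. Phi (hd (fst h)) \<and> hd (fst h) \<in> A})
     = (\<lambda>t. measure_pmf.expectation D (\<lambda>x. Pt t x A))"
    by (rule ext) (rule prob_run[OF sel_false])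
  show ?thesis unfolding e main_limit[symmetric]
    by (rule pmf_dominated[where B=1]) (auto intro: Pt_L set_D_Good Pt_bounds)
qed

end

theorem theorem1:
  fixes Dd :: "'i::finite \<Rightarrow> 'a pmf"
    and V :: "'i \<Rightarrow> 'a set"
    and S :: "'c::finite \<Rightarrow> 'i set"
    and phi :: "'c \<Rightarrow> ('i \<Rightarrow> 'a) \<Rightarrow> bool"
    and sel :: "('i, 'a, 'c) history \<Rightarrow> 'c pmf"
  assumes V_countable: "\<And>i. countable (V i)"
    and dist_on_dom: "\<And>i. set_pmf (Dd i) \<subseteq> V i"
    and scope_nonempty: "\<And>k. S k \<noteq> {}"
    and clause_local: "\<And>k x y. (\<forall>i. x i \<in> V i) \<Longrightarrow> (\<forall>i. y i \<in> V i) \<Longrightarrow>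
                          (\<forall>i\<in>S k. x i = y i) \<Longrightarrow> phi k x = phi k y"
    and extremal: "extremal V S phi"
    and satisfiable: "measure_pmf.prob (prod_dist Dd) {x. formula phi x} > 0"
    and sel_false: "\<And>h. fst h \<noteq> [] \<Longrightarrow> \<not> formula phi (hd (fst h)) \<Longrightarrow>
                          set_pmf (sel h) \<subseteq> {k. \<not> phi k (hd (fst h))}"
  shows "((\<lambda>t. measure_pmf.prob (prs_run phi Dd S sel t) {h. formula phi (hd (fst h))})
           \<longlonglongrightarrow> 1)
       \<and> (\<forall>A. (\<lambda>t. measure_pmf.prob (prs_run phi Dd S sel t)
                   {h. formula phi (hd (fst h)) \<and> hd (fst h) \<in> A})
           \<longlonglongrightarrow> measure_pmf.prob (cond_pmf (prod_dist Dd) {x. formula phi x}) A)"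
proof -
  interpret prs Dd V S phi
    by unfold_locales (fact dist_on_dom scope_nonempty clause_local extremal satisfiable)+
  have ne: "set_pmf (prod_dist Dd) \<inter> {x. formula phi x} \<noteq> {}"
  proof
    assume "set_pmf (prod_dist Dd) \<inter> {x. formula phi x} = {}"
    then have "measure_pmf.prob (prod_dist Dd) {x. formula phi x} = 0"
      using measure_Int_set_pmf[of "prod_dist Dd" "{x. formula phi x}"] by (simp add: Int_commute)
    then show False using satisfiable by simp
  qed
  have p: "measure_pmf.prob (prod_dist Dd) {x. formula phi x} \<noteq> 0" using satisfiable by simp
  show ?thesis
  proof
    have "(\<lambda>t. measure_pmf.prob (prs_run phi Dd S sel t) {h. formula phi (hd (fst h)) \<and> hd (fst h) \<in> UNIV})
      \<longlonglongrightarrow> measure_pmf.prob (prod_dist Dd) ({x. formula phi x} \<inter> UNIV) / measure_pmf.prob (prod_dist Dd) {x. formula phi x}"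
      by (rule final_limit[OF sel_false])
    then show "(\<lambda>t. measure_pmf.prob (prs_run phi Dd S sel t) {h. formula phi (hd (fst h))}) \<longlonglongrightarrow> 1"
      using p by simp
    show "\<forall>A. (\<lambda>t. measure_pmf.prob (prs_run phi Dd S sel t)
                   {h. formula phi (hd (fst h)) \<and> hd (fst h) \<in> A})
           \<longlonglongrightarrow> measure_pmf.prob (cond_pmf (prod_dist Dd) {x. formula phi x}) A"
      using final_limit[OF sel_false] by (simp add: measure_cond_pmf'[OF ne])
  qed
qed

end
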